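(* Let $\mathbb{D}=\{z\in\mathbb{C}:|z|<1\}$ and let $F:\mathbb{D}\to\mathbb{C}$ be a function (no regularity assumed) such that $0\le \operatorname{Re}F(z)\le 1$ for all $z\in\mathbb{D}$ and such that the function $z\mapsto F(z)+z\overline{F(z)}$ is holomorphic on $\mathbb{D}$. Then $F$ is constant.
   Context: $\operatorname{Re}$ denotes the real part of a complex number and $\overline{w}$ the complex conjugate of $w$. *)

theory Defs
  imports "HOL-Analysis.Analysis"
begin

end

theory Submission
  imports Defs "HOL-Complex_Analysis.Complex_Analysis"
begin

lemma L1:
  fixes A :: "complex \<Rightarrow> complex"
  assumes holA: "A holomorphic_on ball 0 1"
    and nn: "\<And>z. z \<in> ball 0 1 \<Longrightarrow> 0 \<le> Re (A z)"
    and z0: "z0 \<in> ball 0 1" and r0: "Re (A z0) = 0"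
  shows "\<forall>z\<in>ball 0 1. A z = A z0"
proof (cases "A constant_on ball 0 1")
  case True
  then obtain c where "\<forall>x\<in>ball 0 1. A x = c" by (auto simp: constant_on_def)
  then show ?thesis using z0 by auto
next
  case False
  have "open (A ` ball 0 1)"
    by (rule open_mapping_thm[OF holA]) (auto simp: False)
  moreover have "A z0 \<in> A ` ball 0 1" using z0 by auto
  ultimately obtain e where e: "e > 0" "ball (A z0) e \<subseteq> A ` ball 0 1"
    by (meson openE)
  have "A z0 - of_real (e/2) \<in> ball (A z0) e" using e by (simp add: dist_norm)
  with e obtain w where "w \<in> ball 0 1" "A w = A z0 - of_real (e/2)" by (metis imageE subsetD)
  then have "Re (A w) < 0" using r0 e by simp
  with nn[OF \<open>w \<in> ball 0 1\<close>] show ?thesis by linarith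
qed

lemma L2:
  fixes A :: "complex \<Rightarrow> complex"
  assumes holA: "A holomorphic_on ball 0 1"
    and nn: "\<And>z. z \<in> ball 0 1 \<Longrightarrow> 0 \<le> Re (A z)"
  shows "\<exists>\<alpha>::complex. norm \<alpha> \<le> 1 \<and> deriv A 0 = 2 * Re (A 0) * \<alpha> \<and>
     (norm \<alpha> = 1 \<longrightarrow> (\<forall>z\<in>ball 0 1. A z = (A 0 + cnj (A 0) * \<alpha> * z) / (1 - \<alpha> * z)))"
proof (cases "Re (A 0) = 0")
  case True
  have c: "\<forall>z\<in>ball 0 1. A z = A 0" using L1[OF holA nn _ True] by (meson centre_in_ball zero_less_one)
  have "deriv A 0 = deriv (\<lambda>_. A 0) 0"
    apply (rule complex_derivative_transform_within_open[OF holA holomorphic_on_const open_ball])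
     apply simp
    using c by blast
  then have d: "deriv A 0 = 0" by simp
  have "A z = (A 0 + cnj (A 0) * 1 * z) / (1 - 1 * z)" if "z \<in> ball 0 1" for z
  proof -
    have "z \<noteq> 1" using that by auto
    then have nz: "1 - z \<noteq> 0" by auto
    have "cnj (A 0) = - A 0" using True by (simp add: complex_eq_iff)
    then have "A 0 + cnj (A 0) * 1 * z = A 0 * (1 - z)" by (simp add: algebra_simps)
    moreover have "A z = A 0" using c that by blast
    ultimately show ?thesis using nz by simp
  qed
  then have f: "\<forall>z\<in>ball 0 1. A z = (A 0 + cnj (A 0) * 1 * z) / (1 - 1 * z)" by blast
  have "deriv A 0 = complex_of_real (2 * Re (A 0)) * 1" using d True by simp
  moreover have "norm (1::complex) \<le> 1" by simp
  ultimately show ?thesis using f by blast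
next
  case False
  then have s: "Re (A 0) > 0" using nn[of 0] by simp
  have pos: "Re (A z) > 0" if "z \<in> ball 0 1" for z
  proof (rule ccontr)
    assume "\<not> Re (A z) > 0"
    then have "Re (A z) = 0" using nn[OF that] by simp
    from L1[OF holA nn that this] have "A 0 = A z" by simp
    then show False using s \<open>Re (A z) = 0\<close> by simp
  qed
  define a where "a = A 0"
  define \<omega> where "\<omega> = (\<lambda>z. (A z - a) / (A z + cnj a))"
  have den: "A z + cnj a \<noteq> 0" if "z \<in> ball 0 1" for z
  proof -
    have "Re (A z + cnj a) > 0" using pos[OF that] s by (simp add: a_def)
    then show ?thesis by (metis order_less_irrefl zero_complex.simps(1))
  qed
  have hol\<omega>: "\<omega> holomorphic_on ball 0 1"
    unfolding \<omega>_def by (intro holomorphic_intros holA) (use den in auto)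
  have \<omega>0: "\<omega> 0 = 0" by (simp add: \<omega>_def a_def)
  have lt: "norm (\<omega> z) < 1" if "norm z < 1" for z
  proof -
    have zb: "z \<in> ball 0 1" using that by simp
    have "norm (A z - a) < norm (A z + cnj a)"
    proof -
      have "(norm (A z - a))^2 < (norm (A z + cnj a))^2"
        using pos[OF zb] s unfolding cmod_power2 a_def
        by (simp add: power2_eq_square algebra_simps)
      then show ?thesis by (meson norm_ge_zero power_less_imp_less_base)
    qed
    then show ?thesis using den[OF zb] by (simp add: \<omega>_def norm_divide divide_less_eq)
  qed
  have dA: "(A has_field_derivative deriv A 0) (at 0)"
    using holomorphic_derivI[OF holA, of 0 UNIV] by simp
  have d0: "A 0 + cnj a \<noteq> 0" using den[of 0] by simp
  have "(\<omega> has_field_derivative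
      (deriv A 0 * (A 0 + cnj a) - (A 0 - a) * deriv A 0) / ((A 0 + cnj a) * (A 0 + cnj a))) (at 0)"
  proof -
    have d1: "((\<lambda>x. A x - a) has_field_derivative deriv A 0) (at 0)"
      using DERIV_diff[OF dA DERIV_const[of a]] by simp
    have d2: "((\<lambda>x. A x + cnj a) has_field_derivative deriv A 0) (at 0)"
      using DERIV_add[OF dA DERIV_const[of "cnj a"]] by simp
    show ?thesis unfolding \<omega>_def using DERIV_divide[OF d1 d2 d0] by simp
  qed
  then have "(\<omega> has_field_derivative deriv A 0 / (A 0 + cnj a)) (at 0)"
    using d0 by (simp add: a_def)
  then have dw: "deriv \<omega> 0 = deriv A 0 / complex_of_real (2 * Re (A 0))"
    by (simp add: DERIV_imp_deriv a_def complex_add_cnj)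
  have "2 * Re (A 0) \<noteq> 0" using s by simp
  then have dA0: "deriv A 0 = 2 * Re (A 0) * deriv \<omega> 0"
    using dw by (simp add: field_simps)
  note S = Schwarz_Lemma[OF hol\<omega> \<omega>0 lt, of 0]
  show ?thesis
  proof (intro exI[of _ "deriv \<omega> 0"] conjI impI)
    show "norm (deriv \<omega> 0) \<le> 1" using S(2) by simp
    show "deriv A 0 = 2 * Re (A 0) * deriv \<omega> 0" by (fact dA0)
    assume n1: "norm (deriv \<omega> 0) = 1"
    then obtain \<beta> where \<beta>: "\<forall>z. norm z < 1 \<longrightarrow> \<omega> z = \<beta> * z" "norm \<beta> = 1"
      using S(3) n1 by auto
    have "deriv \<omega> 0 = deriv (\<lambda>z. \<beta> * z) 0"
      by (rule complex_derivative_transform_within_open[OF hol\<omega>]) (use \<beta> in \<open>auto intro: holomorphic_intros\<close>)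
    then have "deriv \<omega> 0 = \<beta>" by simp
    show "\<forall>z\<in>ball 0 1. A z = (A 0 + cnj (A 0) * deriv \<omega> 0 * z) / (1 - deriv \<omega> 0 * z)"
    proof
      fix z :: complex assume zb: "z \<in> ball 0 1"
      have "norm (\<beta> * z) < 1" using zb \<beta>(2) by (simp add: norm_mult)
      then have nz: "1 - \<beta> * z \<noteq> 0" by auto
      have "(A z - a) / (A z + cnj a) = \<beta> * z" using \<beta>(1) zb by (simp add: \<omega>_def)
      then have "A z - a = \<beta> * z * (A z + cnj a)" using den[OF zb] by (simp add: field_simps)
      then have "A z * (1 - \<beta> * z) = a + cnj a * \<beta> * z" by (simp add: algebra_simps)
      then show "A z = (A 0 + cnj (A 0) * deriv \<omega> 0 * z) / (1 - deriv \<omega> 0 * z)"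
        using nz \<open>deriv \<omega> 0 = \<beta>\<close> by (simp add: field_simps a_def)
    qed
  qed
qed


lemma aux_div: "X / d - X * u / d = X * (1 - u) / (d::real)"
  by (simp add: diff_divide_distrib right_diff_distrib)

lemma alpha_one:
  fixes \<alpha> :: complex
  assumes "norm \<alpha> \<le> 1" "Re \<alpha> \<ge> 1"
  shows "\<alpha> = 1"
proof -
  have r: "Re \<alpha> = 1" using complex_Re_le_cmod[of \<alpha>] assms by linarith
  have "(norm \<alpha>)^2 \<le> 1" using assms(1) by (simp add: power_le_one)
  then have "(Re \<alpha>)^2 + (Im \<alpha>)^2 \<le> 1" by (simp add: cmod_power2)
  then have "(Im \<alpha>)^2 \<le> 0" using r by simp
  then have "Im \<alpha> = 0" by simp
  then show ?thesis using r by (simp add: complex_eq_iff)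
qed

theorem theorem1:
  fixes F :: "complex \<Rightarrow> complex"
  assumes "\<And>z. z \<in> ball 0 1 \<Longrightarrow> 0 \<le> Re (F z) \<and> Re (F z) \<le> 1"
    and "(\<lambda>z. F z + z * cnj (F z)) holomorphic_on ball 0 1"
  shows "\<exists>c. \<forall>z \<in> ball 0 1. F z = c"
proof -
  define G where "G = (\<lambda>z. F z + z * cnj (F z))"
  have holG: "G holomorphic_on ball 0 1" using assms(2) by (simp add: G_def)
  have nz1: "1 - z \<noteq> 0" if "z \<in> ball 0 1" for z :: complex
    using that by auto
  define P where "P = (\<lambda>z. G z / (1 - z))"
  define K where "K = (\<lambda>z::complex. (1 + z) / (1 - z))"
  define B where "B = (\<lambda>z. K z - P z)"
  have holP: "P holomorphic_on ball 0 1"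
    unfolding P_def by (intro holomorphic_intros holG) (use nz1 in auto)
  have holK: "K holomorphic_on ball 0 1"
    unfolding K_def by (intro holomorphic_intros) (use nz1 in auto)
  have holB: "B holomorphic_on ball 0 1"
    unfolding B_def by (intro holomorphic_intros holK holP)
  have ReP: "Re (P z) = (1 - ((Re z)^2 + (Im z)^2)) * Re (F z) / ((1 - Re z)^2 + (Im z)^2)" for z
    by (simp add: P_def G_def Re_divide power2_eq_square algebra_simps)
  have ReK: "Re (K z) = (1 - ((Re z)^2 + (Im z)^2)) / ((1 - Re z)^2 + (Im z)^2)" for z
    by (simp add: K_def Re_divide power2_eq_square algebra_simps)
  have r2: "(Re z)^2 + (Im z)^2 < 1" if "z \<in> ball 0 1" for z
  proof -
    have "norm z < 1" using that by simp
    then have "(norm z)^2 < 1" by (simp add: power_less_one_iff)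
    then show ?thesis by (simp add: cmod_power2)
  qed
  have nnP: "0 \<le> Re (P z)" if "z \<in> ball 0 1" for z
    unfolding ReP using r2[OF that] assms(1)[OF that]
    by (intro divide_nonneg_nonneg mult_nonneg_nonneg) auto
  have nnB: "0 \<le> Re (B z)" if "z \<in> ball 0 1" for z
  proof -
    have "Re (B z) = (1 - ((Re z)^2 + (Im z)^2)) * (1 - Re (F z)) / ((1 - Re z)^2 + (Im z)^2)"
      unfolding B_def minus_complex.sel ReP ReK by (rule aux_div)
    also have "\<dots> \<ge> 0" using r2[OF that] assms(1)[OF that]
      by (intro divide_nonneg_nonneg mult_nonneg_nonneg) auto
    finally show ?thesis .
  qed
  obtain \<alpha> :: complex where \<alpha>: "norm \<alpha> \<le> 1" "deriv P 0 = complex_of_real (2 * Re (P 0)) * \<alpha>"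
    "norm \<alpha> = 1 \<longrightarrow> (\<forall>z\<in>ball 0 1. P z = (P 0 + cnj (P 0) * \<alpha> * z) / (1 - \<alpha> * z))"
    using L2[OF holP nnP] by blast
  obtain \<beta> :: complex where \<beta>: "norm \<beta> \<le> 1" "deriv B 0 = complex_of_real (2 * Re (B 0)) * \<beta>"
    "norm \<beta> = 1 \<longrightarrow> (\<forall>z\<in>ball 0 1. B z = (B 0 + cnj (B 0) * \<beta> * z) / (1 - \<beta> * z))"
    using L2[OF holB nnB] by blast
  define c where "c = F 0"
  have P0: "P 0 = c" by (simp add: P_def G_def c_def)
  have B0: "B 0 = 1 - c" by (simp add: B_def K_def P0)
  have dP: "(P has_field_derivative deriv P 0) (at 0)"
    using holomorphic_derivI[OF holP, of 0 UNIV] by simp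
  have dK: "(K has_field_derivative 2) (at 0)"
  proof -
    have d1: "((\<lambda>z::complex. 1 + z) has_field_derivative 1) (at 0)"
      using DERIV_add[OF DERIV_const[of 1] DERIV_ident] by simp
    have d2: "((\<lambda>z::complex. 1 - z) has_field_derivative -1) (at 0)"
      using DERIV_diff[OF DERIV_const[of 1] DERIV_ident] by simp
    show ?thesis using DERIV_divide[OF d1 d2] unfolding K_def by simp
  qed
  have "(B has_field_derivative 2 - deriv P 0) (at 0)"
    unfolding B_def by (rule DERIV_diff[OF dK dP])
  then have dB: "deriv B 0 = 2 - deriv P 0" by (rule DERIV_imp_deriv)
  define s where "s = Re c"
  have s01: "0 \<le> s" "s \<le> 1" using assms(1)[of 0] by (auto simp: s_def c_def)
  have eq: "2 = complex_of_real (2 * s) * \<alpha> + complex_of_real (2 * (1 - s)) * \<beta>"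
    using dB \<alpha>(2) \<beta>(2) by (simp add: P0 B0 s_def algebra_simps)
  have req: "1 = s * Re \<alpha> + (1 - s) * Re \<beta>"
    using arg_cong[OF eq, of Re] by (simp add: algebra_simps)
  have Ra: "Re \<alpha> \<le> 1" using \<alpha>(1) complex_Re_le_cmod[of \<alpha>] by linarith
  have Rb: "Re \<beta> \<le> 1" using \<beta>(1) complex_Re_le_cmod[of \<beta>] by linarith
  have Pform: "\<forall>z\<in>ball 0 1. P z = (c + cnj c * z) / (1 - z)"
  proof (cases "s = 0")
    case False
    then have "s > 0" using s01 by simp
    have "(1 - s) * Re \<beta> \<le> 1 - s" using Rb s01 by (simp add: mult_left_le)
    then have "s * Re \<alpha> \<ge> s" using req by linarith
    then have "Re \<alpha> \<ge> 1" using \<open>s > 0\<close> by simp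
    then have "\<alpha> = 1" using alpha_one \<alpha>(1) by blast
    then have "norm \<alpha> = 1" by simp
    then have H: "\<forall>z\<in>ball 0 1. P z = (P 0 + cnj (P 0) * \<alpha> * z) / (1 - \<alpha> * z)"
      using \<alpha>(3) by blast
    show ?thesis
    proof
      fix z :: complex assume "z \<in> ball 0 1"
      then have "P z = (P 0 + cnj (P 0) * \<alpha> * z) / (1 - \<alpha> * z)" using H by blast
      then show "P z = (c + cnj c * z) / (1 - z)" using \<open>\<alpha> = 1\<close> P0 by simp
    qed
  next
    case True
    then have "Re \<beta> \<ge> 1" using req by simp
    then have b1: "\<beta> = 1" using alpha_one \<beta>(1) by blast
    show ?thesis
    proof
      fix z :: complex assume zb: "z \<in> ball 0 1"
      have "\<forall>z\<in>ball 0 1. B z = (B 0 + cnj (B 0) * \<beta> * z) / (1 - \<beta> * z)"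
        using \<beta>(3) b1 by (metis norm_one)
      then have "B z = (B 0 + cnj (B 0) * \<beta> * z) / (1 - \<beta> * z)" using zb by blast
      then have "B z = (B 0 + cnj (B 0) * z) / (1 - z)" using b1 by simp
      then have "B z = ((1 - c) + cnj (1 - c) * z) / (1 - z)" by (simp only: B0)
      then have "K z - P z = (1 - c + (1 - cnj c) * z) / (1 - z)" by (simp add: B_def)
      then show "P z = (c + cnj c * z) / (1 - z)"
        using nz1[OF zb] by (simp add: K_def field_simps)
    qed
  qed
  have "F z = c" if zb: "z \<in> ball 0 1" for z
  proof -
    have "G z = c + cnj c * z"
    proof -
      have "P z = (c + cnj c * z) / (1 - z)" using Pform zb by blast
      then show ?thesis using nz1[OF zb] by (simp add: P_def field_simps)
    qed
    then have e: "(F z - c) = - (z * cnj (F z - c))" by (simp add: G_def algebra_simps)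
    have "norm (F z - c) = norm z * norm (F z - c)"
      using arg_cong[OF e, of norm] by (simp only: norm_minus_cancel norm_mult complex_mod_cnj)
    moreover have "norm z < 1" using zb by simp
    ultimately have "norm (F z - c) = 0"
      by (metis mult_cancel_right2 norm_ge_zero order_less_irrefl)
    then show ?thesis by simp
  qed
  then show ?thesis by blast
qed

end
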